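(* Let the EC fluctuations $\mathbf{D}^\pm_{EC}$ satisfy conditions (C1)–(C5) below, and consider the flux differencing nonconservative DGSEM $$\omega_i\frac{\Delta x_k}{2}\dot{\mathbf{U}}^k_i+\omega_i\sum_{m=0}^N 2\mathcal{D}_{im}\mathbf{D}^-_{EC}(\mathbf{U}^k_i,\mathbf{U}^k_m)+\delta_{i0}\mathbf{D}^+_{EC}(\mathbf{U}^{k-1}_N,\mathbf{U}^k_0)+\delta_{iN}\mathbf{D}^-_{EC}(\mathbf{U}^k_N,\mathbf{U}^{k+1}_0)=0,\quad i=0,\dots,N,$$ on an element $\Omega^k$ with neighbors $\Omega^{k-1},\Omega^{k+1}$. Assume the semidiscrete solution is differentiable in time so that $\mathbf{w}(\mathbf{U}_i^k)^T\dot{\mathbf{U}}_i^k=\frac{d}{dt}S(\mathbf{U}_i^k)$. Then $$\sum_{i=0}^N\omega_i\frac{\Delta x_k}{2}\frac{d S(\mathbf{U}^k_i)}{dt}=\mathcal{F}(\mathbf{U}^{k-1}_N,\mathbf{U}^k_0)-\mathcal{F}(\mathbf{U}^k_N,\mathbf{U}^{k+1}_0),$$ where the numerical entropy flux $\mathcal{F}(\mathbf{u}_L,\mathbf{u}_R):=q(\mathbf{u}_L)+\mathbf{w}(\mathbf{u}_L)^T\mathbf{D}^-_{EC}(\mathbf{u}_L,\mathbf{u}_R)=q(\mathbf{u}_R)-\mathbf{w}(\mathbf{u}_R)^T\mathbf{D}^+_{EC}(\mathbf{u}_L,\mathbf{u}_R)$ is consistent, $\mathcal{F}(\mathbf{u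},\mathbf{u})=q(\mathbf{u})$.
   Context: System: $\mathbf{u}_t+\mathbf{f}(\mathbf{u})_x+\mathbf{B}(\mathbf{u})\mathbf{u}_x=0$, $\mathbf{u}\in\mathcal{U}\subset\mathbb{R}^n$, generalized Jacobian $\mathbf{A}:=\mathbf{f}_{\mathbf{u}}+\mathbf{B}$. Entropy pair: a strictly convex $C^2$ function $S:\mathcal{U}\to\mathbb{R}$ and entropy flux $q:\mathcal{U}\to\mathbb{R}$ with $q_{\mathbf{u}}=\mathbf{w}^T(\mathbf{f}_{\mathbf{u}}+\mathbf{B})$, where $\mathbf{w}(\mathbf{u}):=S_{\mathbf{u}}(\mathbf{u})$ are the entropy variables. Write $\mathbf{w}_L=\mathbf{w}(\mathbf{u}_L)$, $q_L=q(\mathbf{u}_L)$, etc. A family of paths is a Lipschitz map $\Phi(s;\mathbf{u}_L,\mathbf{u}_R)\in\mathcal{U}$, $s\in[0,1]$, with $\Phi(0;\mathbf{u}_L,\mathbf{u}_R)=\mathbf{u}_L$, $\Phi(1;\mathbf{u}_L,\mathbf{u}_R)=\mathbf{u}_R$, $\Phi(s;\mathbf{u},\mathbf{u})=\mathbf{u}$. Fluctuations $\mathbf{D}^\pm:\mathcal{U}\times\mathcal{U}\to\mathbb{R}^n$ (Lipschitz) are called entropy conservative (EC), written $\mathbf{D}^\pm_{EC}$, if for all $\mathbf{u},\mathbf{u}_L,\mathbf{u}_R$: (C1) $\mathbf{D}^\pm(\mathbf{u},\mathbf{u})=0$; (C2) $\mathbf{D}^-(\mathbf{u}_L,\mathbf{u}_R)+\mathbf{D}^+(\mathbf{u}_L,\mathbf{u}_R)=\int_0^1\mathbf{A}(\Phi(s;\mathbf{u}_L,\mathbf{u}_R))\partial_s\Phi(s;\mathbf{u}_L,\mathbf{u}_R)\,ds$;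 (C3) $\mathbf{D}^-(\mathbf{u}_L,\mathbf{u}_R)+\mathbf{D}^+(\mathbf{u}_R,\mathbf{u}_L)=0$; (C4) $\mathbf{w}_L^T\mathbf{D}^-(\mathbf{u}_L,\mathbf{u}_R)+\mathbf{w}_R^T\mathbf{D}^+(\mathbf{u}_L,\mathbf{u}_R)=q_R-q_L$; (C5) $\frac{\partial\mathbf{D}^-(\mathbf{u}_L,\mathbf{u}_R)}{\partial\mathbf{u}_R}\big|_{\mathbf{u}_R=\mathbf{u}_L}=\frac12\mathbf{A}(\mathbf{u}_L)$. Discretization: the domain is split into elements $\Omega^k=[x_{k-1},x_k]$ of width $\Delta x_k$, each mapped affinely to $[-1,1]$. On each element the solution is a polynomial of degree $N$ with nodal values $\mathbf{U}^k_i\in\mathcal{U}$ at the LGL nodes $-1=\xi_0<\dots<\xi_N=1$ with LGL quadrature weights $\omega_i>0$; $\mathcal{D}_{ij}=l_j'(\xi_i)$ is the differentiation matrix of the Lagrange basis $l_j$ on these nodes. These operators satisfy the summation-by-parts property $\mathcal{Q}+\mathcal{Q}^T=\mathcal{B}$ with $\mathcal{Q}_{ij}=\omega_i\mathcal{D}_{ij}$ and $\mathcal{B}_{ij}=\delta_{iN}\delta_{jN}-\delta_{i0}\delta_{j0}$; also $\sum_j\mathcal{D}_{ij}=0$. $\delta$ denotes the Kronecker delta. *)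

theory Defs
  imports "HOL-Analysis.Analysis" "HOL-Computational_Algebra.Polynomial"
begin

definition strictly_convex_on :: "('a::real_vector) set \<Rightarrow> ('a \<Rightarrow> real) \<Rightarrow> bool" where
  "strictly_convex_on X F \<longleftrightarrow>
     (\<forall>x\<in>X. \<forall>y\<in>X. \<forall>a::real. x \<noteq> y \<and> 0 < a \<and> a < 1 \<and> a *\<^sub>R x + (1 - a) *\<^sub>R y \<in> X \<longrightarrow>
        F (a *\<^sub>R x + (1 - a) *\<^sub>R y) < a * F x + (1 - a) * F y)"

definition kron :: "nat \<Rightarrow> nat \<Rightarrow> real" where
  "kron i j = (if i = j then 1 else 0)"

text \<open>Legendre-Gauss-Lobatto nodes and weights of degree N (N+1 points):
  strictly increasing nodes with xi 0 = -1, xi N = 1, positive weights, and the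
  quadrature is exact for all polynomials of degree at most 2N-1
  (this characterises the LGL rule uniquely).\<close>
definition LGL :: "nat \<Rightarrow> (nat \<Rightarrow> real) \<Rightarrow> (nat \<Rightarrow> real) \<Rightarrow> bool" where
  "LGL N \<xi> \<omega> \<longleftrightarrow> 1 \<le> N \<and> \<xi> 0 = -1 \<and> \<xi> N = 1 \<and>
     (\<forall>i<N. \<xi> i < \<xi> (Suc i)) \<and> (\<forall>i\<le>N. 0 < \<omega> i) \<and>
     (\<forall>p::real poly. degree p \<le> 2 * N - 1 \<longrightarrow>
        (\<Sum>i\<le>N. \<omega> i * poly p (\<xi> i)) = integral {-1..1} (poly p))"

definition lagrange_basis :: "nat \<Rightarrow> (nat \<Rightarrow> real) \<Rightarrow> nat \<Rightarrow> real \<Rightarrow> real" where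
  "lagrange_basis N \<xi> j x = (\<Prod>m\<in>{0..N} - {j}. (x - \<xi> m) / (\<xi> j - \<xi> m))"

definition diff_matrix :: "nat \<Rightarrow> (nat \<Rightarrow> real) \<Rightarrow> nat \<Rightarrow> nat \<Rightarrow> real" where
  "diff_matrix N \<xi> i j = deriv (lagrange_basis N \<xi> j) (\<xi> i)"

definition num_entropy_flux ::
  "('v \<Rightarrow> real) \<Rightarrow> ('v \<Rightarrow> 'v::real_inner) \<Rightarrow> ('v \<Rightarrow> 'v \<Rightarrow> 'v) \<Rightarrow> 'v \<Rightarrow> 'v \<Rightarrow> real" where
  "num_entropy_flux q w Dm uL uR = q uL + w uL \<bullet> Dm uL uR"

end

theory Submission
  imports Defs
begin

lemma sum_kron_l: "j \<le> N \<Longrightarrow> (\<Sum>i\<le>N. kron i j * c i) = c j"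
proof -
  assume "j \<le> N"
  have "(\<Sum>i\<le>N. kron i j * c i) = (\<Sum>i\<le>N. if j = i then c i else 0)"
    by (intro sum.cong) (auto simp: kron_def)
  then show ?thesis using \<open>j \<le> N\<close> by (simp add: sum.delta)
qed
lemma sum_kron_r: "j \<le> N \<Longrightarrow> (\<Sum>i\<le>N. c i * kron i j) = c j"
  using sum_kron_l[of j N c] by (simp add: mult.commute)

lemma sbp_vol:
  fixes Q :: "nat \<Rightarrow> nat \<Rightarrow> real" and a qq :: "nat \<Rightarrow> nat \<Rightarrow> real"
  assumes SBP: "\<And>i j. i \<le> N \<Longrightarrow> j \<le> N \<Longrightarrow> Q i j + Q j i = kron i N * kron j N - kron i 0 * kron j 0"
    and rs: "\<And>i. i \<le> N \<Longrightarrow> (\<Sum>j\<le>N. Q i j) = 0"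
    and aii: "\<And>i. i \<le> N \<Longrightarrow> a i i = 0"
    and aq: "\<And>i m. i \<le> N \<Longrightarrow> m \<le> N \<Longrightarrow> a i m - a m i = p m - p i"
  shows "(\<Sum>i\<le>N. \<Sum>m\<le>N. 2 * Q i m * a i m) = p N - p 0"
proof -
  define X where "X = (\<Sum>i\<le>N. \<Sum>m\<le>N. Q i m * a i m)"
  have sw: "X = (\<Sum>i\<le>N. \<Sum>m\<le>N. Q m i * a m i)"
    unfolding X_def by (rule sum.swap)
  also have "\<dots> = (\<Sum>i\<le>N. \<Sum>m\<le>N. (kron i N * kron m N - kron i 0 * kron m 0) * a m i - Q i m * a m i)"
    by (intro sum.cong refl) (simp add: SBP[symmetric] algebra_simps)
  also have "\<dots> = (\<Sum>i\<le>N. \<Sum>m\<le>N. (kron i N * kron m N - kron i 0 * kron m 0) * a m i) - (\<Sum>i\<le>N. \<Sum>m\<le>N. Q i m * a m i)"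
    by (simp add: sum_subtractf)
  also have "(\<Sum>i\<le>N. \<Sum>m\<le>N. (kron i N * kron m N - kron i 0 * kron m 0) * a m i) = 0"
  proof -
    have "(\<Sum>i\<le>N. \<Sum>m\<le>N. (kron i N * kron m N - kron i 0 * kron m 0) * a m i)
       = (\<Sum>i\<le>N. kron i N * (\<Sum>m\<le>N. kron m N * a m i)) - (\<Sum>i\<le>N. kron i 0 * (\<Sum>m\<le>N. kron m 0 * a m i))"
      by (simp add: sum_subtractf sum_distrib_left algebra_simps)
    also have "\<dots> = 0" by (simp add: sum_kron_l aii)
    finally show ?thesis .
  qed
  finally have X2: "X + (\<Sum>i\<le>N. \<Sum>m\<le>N. Q i m * a m i) = 0" by simp
  have "(\<Sum>i\<le>N. \<Sum>m\<le>N. 2 * Q i m * a i m) = X + X"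
    unfolding X_def by (simp add: sum.distrib[symmetric] algebra_simps)
  also have "\<dots> = X - (\<Sum>i\<le>N. \<Sum>m\<le>N. Q i m * a m i)" using X2 by simp
  also have "\<dots> = (\<Sum>i\<le>N. \<Sum>m\<le>N. Q i m * (p m - p i))"
    unfolding X_def by (simp add: sum_subtractf[symmetric] aq[symmetric] algebra_simps)
  also have "\<dots> = (\<Sum>i\<le>N. \<Sum>m\<le>N. Q i m * p m) - (\<Sum>i\<le>N. p i * (\<Sum>m\<le>N. Q i m))"
    by (simp add: sum_subtractf sum_distrib_left algebra_simps)
  also have "(\<Sum>i\<le>N. p i * (\<Sum>m\<le>N. Q i m)) = 0" by (simp add: rs)
  also have "(\<Sum>i\<le>N. \<Sum>m\<le>N. Q i m * p m) = (\<Sum>m\<le>N. \<Sum>i\<le>N. Q i m * p m)"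
    by (rule sum.swap)
  also have "\<dots> = (\<Sum>m\<le>N. \<Sum>i\<le>N. (kron i N * kron m N - kron i 0 * kron m 0) * p m - Q m i * p m)"
    by (intro sum.cong refl) (simp add: SBP[symmetric] algebra_simps)
  also have "\<dots> = (\<Sum>m\<le>N. kron m N * p m * (\<Sum>i\<le>N. kron i N)) - (\<Sum>m\<le>N. kron m 0 * p m * (\<Sum>i\<le>N. kron i 0)) - (\<Sum>m\<le>N. p m * (\<Sum>i\<le>N. Q m i))"
    by (simp add: sum_subtractf sum_distrib_left sum_distrib_right sum.distrib algebra_simps)
  also have "\<dots> = p N - p 0"
    using sum_kron_r[of N N "\<lambda>_. 1"] sum_kron_r[of 0 N "\<lambda>_. 1"]
    by (simp add: rs sum_kron_l sum_kron_r[where c="\<lambda>m. m * p m" for m] mult.assoc[symmetric])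
  finally show ?thesis by simp
qed

theorem lemma2:
  fixes \<U> :: "(real^'n) set"
    and f :: "real^'n \<Rightarrow> real^'n" and Df :: "real^'n \<Rightarrow> real^'n^'n"
    and B :: "real^'n \<Rightarrow> real^'n^'n"
    and S :: "real^'n \<Rightarrow> real" and q :: "real^'n \<Rightarrow> real"
    and w :: "real^'n \<Rightarrow> real^'n" and Hw :: "real^'n \<Rightarrow> real^'n^'n"
    and \<Phi> :: "real \<Rightarrow> real^'n \<Rightarrow> real^'n \<Rightarrow> real^'n"
    and Dm Dp :: "real^'n \<Rightarrow> real^'n \<Rightarrow> real^'n"
    and N :: nat and \<xi> \<omega> :: "nat \<Rightarrow> real" and \<Delta>x :: real
    and U :: "real \<Rightarrow> nat \<Rightarrow> real^'n" and Ul Ur :: "real \<Rightarrow> real^'n"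
    and U' :: "nat \<Rightarrow> real^'n" and t :: real
  assumes open_U: "open \<U>"
    \<comment> \<open>flux Jacobian f_u and generalized Jacobian A = f_u + B\<close>
    and f_deriv: "\<And>u. u \<in> \<U> \<Longrightarrow> (f has_derivative (\<lambda>h. Df u *v h)) (at u)"
    \<comment> \<open>entropy pair: S strictly convex, C^2, with gradient w (entropy variables)\<close>
    and S_convex: "strictly_convex_on \<U> S"
    and S_grad: "\<And>u. u \<in> \<U> \<Longrightarrow> (S has_derivative (\<lambda>h. w u \<bullet> h)) (at u)"
    and w_C1: "\<And>u. u \<in> \<U> \<Longrightarrow> (w has_derivative (\<lambda>h. Hw u *v h)) (at u)"
    and Hw_cont: "continuous_on \<U> Hw"
    and q_deriv: "\<And>u. u \<in> \<U> \<Longrightarrow>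
        (q has_derivative (\<lambda>h. w u \<bullet> ((Df u + B u) *v h))) (at u)"
    \<comment> \<open>family of paths\<close>
    and Phi_lip: "\<exists>L. L-lipschitz_on ({0..1} \<times> (\<U> \<times> \<U>)) (\<lambda>(s, uL, uR). \<Phi> s uL uR)"
    and Phi_in: "\<And>s uL uR. s \<in> {0..1} \<Longrightarrow> uL \<in> \<U> \<Longrightarrow> uR \<in> \<U> \<Longrightarrow> \<Phi> s uL uR \<in> \<U>"
    and Phi_0: "\<And>uL uR. uL \<in> \<U> \<Longrightarrow> uR \<in> \<U> \<Longrightarrow> \<Phi> 0 uL uR = uL"
    and Phi_1: "\<And>uL uR. uL \<in> \<U> \<Longrightarrow> uR \<in> \<U> \<Longrightarrow> \<Phi> 1 uL uR = uR"
    and Phi_diag: "\<And>s u. s \<in> {0..1} \<Longrightarrow> u \<in> \<U> \<Longrightarrow> \<Phi> s u u = u"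
    \<comment> \<open>entropy conservative fluctuations\<close>
    and Dm_lip: "\<exists>L. L-lipschitz_on (\<U> \<times> \<U>) (\<lambda>(uL, uR). Dm uL uR)"
    and Dp_lip: "\<exists>L. L-lipschitz_on (\<U> \<times> \<U>) (\<lambda>(uL, uR). Dp uL uR)"
    and C1: "\<And>u. u \<in> \<U> \<Longrightarrow> Dm u u = 0 \<and> Dp u u = 0"
    and C2: "\<And>uL uR. uL \<in> \<U> \<Longrightarrow> uR \<in> \<U> \<Longrightarrow>
        Dm uL uR + Dp uL uR =
        integral {0..1} (\<lambda>s. (Df (\<Phi> s uL uR) + B (\<Phi> s uL uR)) *v
                              vector_derivative (\<lambda>r. \<Phi> r uL uR) (at s))"
    and C3: "\<And>uL uR. uL \<in> \<U> \<Longrightarrow> uR \<in> \<U> \<Longrightarrow> Dm uL uR + Dp uR uL = 0"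
    and C4: "\<And>uL uR. uL \<in> \<U> \<Longrightarrow> uR \<in> \<U> \<Longrightarrow>
        w uL \<bullet> Dm uL uR + w uR \<bullet> Dp uL uR = q uR - q uL"
    and C5: "\<And>uL. uL \<in> \<U> \<Longrightarrow>
        ((\<lambda>uR. Dm uL uR) has_derivative (\<lambda>h. (1/2) *\<^sub>R ((Df uL + B uL) *v h))) (at uL)"
    \<comment> \<open>LGL discretization, with its SBP properties\<close>
    and lgl: "LGL N \<xi> \<omega>"
    and SBP: "\<And>i j. i \<le> N \<Longrightarrow> j \<le> N \<Longrightarrow>
        \<omega> i * diff_matrix N \<xi> i j + \<omega> j * diff_matrix N \<xi> j i
          = kron i N * kron j N - kron i 0 * kron j 0"
    and rowsum: "\<And>i. i \<le> N \<Longrightarrow> (\<Sum>j\<le>N. diff_matrix N \<xi> i j) = 0"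
    and dx_pos: "0 < \<Delta>x"
    \<comment> \<open>semidiscrete solution on element k and neighbouring traces at time t\<close>
    and U_in: "\<And>i. i \<le> N \<Longrightarrow> U t i \<in> \<U>"
    and Ul_in: "Ul t \<in> \<U>" and Ur_in: "Ur t \<in> \<U>"
    and U_diff: "\<And>i. i \<le> N \<Longrightarrow> ((\<lambda>\<tau>. U \<tau> i) has_vector_derivative U' i) (at t)"
    and scheme: "\<And>i. i \<le> N \<Longrightarrow>
        (\<omega> i * (\<Delta>x / 2)) *\<^sub>R U' i
        + \<omega> i *\<^sub>R (\<Sum>m\<le>N. (2 * diff_matrix N \<xi> i m) *\<^sub>R Dm (U t i) (U t m))
        + kron i 0 *\<^sub>R Dp (Ul t) (U t 0)
        + kron i N *\<^sub>R Dm (U t N) (Ur t) = 0"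
  shows "(\<Sum>i\<le>N. \<omega> i * (\<Delta>x / 2) * deriv (\<lambda>\<tau>. S (U \<tau> i)) t)
           = num_entropy_flux q w Dm (Ul t) (U t 0) - num_entropy_flux q w Dm (U t N) (Ur t)
         \<and> (\<forall>uL\<in>\<U>. \<forall>uR\<in>\<U>. num_entropy_flux q w Dm uL uR = q uR - w uR \<bullet> Dp uL uR)
         \<and> (\<forall>u\<in>\<U>. num_entropy_flux q w Dm u u = q u)"
proof -
  have F2: "\<forall>uL\<in>\<U>. \<forall>uR\<in>\<U>. num_entropy_flux q w Dm uL uR = q uR - w uR \<bullet> Dp uL uR"
    using C4 by (auto simp: num_entropy_flux_def algebra_simps)
  have F3: "\<forall>u\<in>\<U>. num_entropy_flux q w Dm u u = q u"
    using C1 by (simp add: num_entropy_flux_def)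
  define a where "a i m = w (U t i) \<bullet> Dm (U t i) (U t m)" for i m
  define p where "p i = q (U t i)" for i
  define Q where "Q i m = \<omega> i * diff_matrix N \<xi> i m" for i m
  have der: "deriv (\<lambda>\<tau>. S (U \<tau> i)) t = w (U t i) \<bullet> U' i" if i: "i \<le> N" for i
  proof -
    have "((\<lambda>\<tau>. U \<tau> i) has_derivative (\<lambda>h. h *\<^sub>R U' i)) (at t)"
      using U_diff[OF i] by (simp add: has_vector_derivative_def)
    from diff_chain_at[OF this S_grad[OF U_in[OF i]]]
    have "((\<lambda>\<tau>. S (U \<tau> i)) has_derivative (\<lambda>h. w (U t i) \<bullet> (h *\<^sub>R U' i))) (at t)"
      by (simp add: o_def)
    moreover have "(\<lambda>h. w (U t i) \<bullet> (h *\<^sub>R U' i)) = (\<lambda>h. (w (U t i) \<bullet> U' i) * h)"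
      by (simp add: fun_eq_iff)
    ultimately have "((\<lambda>\<tau>. S (U \<tau> i)) has_derivative (\<lambda>h. (w (U t i) \<bullet> U' i) * h)) (at t)"
      by metis
    then have "((\<lambda>\<tau>. S (U \<tau> i)) has_real_derivative (w (U t i) \<bullet> U' i)) (at t)"
      unfolding has_field_derivative_def by assumption
    then show ?thesis by (rule DERIV_imp_deriv)
  qed
  have row: "\<omega> i * (\<Delta>x / 2) * (w (U t i) \<bullet> U' i) + (\<Sum>m\<le>N. 2 * Q i m * a i m)
     + kron i 0 * (w (U t 0) \<bullet> Dp (Ul t) (U t 0)) + kron i N * (w (U t N) \<bullet> Dm (U t N) (Ur t)) = 0"
    if i: "i \<le> N" for i
  proof -
    have "w (U t i) \<bullet> ((\<omega> i * (\<Delta>x / 2)) *\<^sub>R U' i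
        + \<omega> i *\<^sub>R (\<Sum>m\<le>N. (2 * diff_matrix N \<xi> i m) *\<^sub>R Dm (U t i) (U t m))
        + kron i 0 *\<^sub>R Dp (Ul t) (U t 0)
        + kron i N *\<^sub>R Dm (U t N) (Ur t)) = 0"
      using scheme[OF i] by simp
    moreover have "kron i 0 * (w (U t i) \<bullet> Dp (Ul t) (U t 0)) = kron i 0 * (w (U t 0) \<bullet> Dp (Ul t) (U t 0))"
      by (simp add: kron_def)
    moreover have "kron i N * (w (U t i) \<bullet> Dm (U t N) (Ur t)) = kron i N * (w (U t N) \<bullet> Dm (U t N) (Ur t))"
      by (simp add: kron_def)
    ultimately show ?thesis
      by (simp add: inner_add_right inner_sum_right sum_distrib_left a_def Q_def algebra_simps)
  qed
  have vol: "(\<Sum>i\<le>N. \<Sum>m\<le>N. 2 * Q i m * a i m) = p N - p 0"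
  proof (rule sbp_vol)
    show "Q i j + Q j i = kron i N * kron j N - kron i 0 * kron j 0" if "i \<le> N" "j \<le> N" for i j
      using SBP[OF that] by (simp add: Q_def)
    show "(\<Sum>j\<le>N. Q i j) = 0" if "i \<le> N" for i
      using rowsum[OF that] by (simp add: Q_def sum_distrib_left[symmetric])
    show "a i i = 0" if "i \<le> N" for i
      using C1[OF U_in[OF that]] by (simp add: a_def)
    show "a i m - a m i = p m - p i" if "i \<le> N" "m \<le> N" for i m
    proof -
      have "Dm (U t m) (U t i) = - Dp (U t i) (U t m)"
        using C3[OF U_in[OF that(2)] U_in[OF that(1)]] by (simp add: eq_neg_iff_add_eq_0)
      then show ?thesis
        using C4[OF U_in[OF that(1)] U_in[OF that(2)]] by (simp add: a_def p_def)
    qed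
  qed
  have "(\<Sum>i\<le>N. \<omega> i * (\<Delta>x / 2) * deriv (\<lambda>\<tau>. S (U \<tau> i)) t)
      = (\<Sum>i\<le>N. \<omega> i * (\<Delta>x / 2) * (w (U t i) \<bullet> U' i))"
    by (intro sum.cong refl) (simp add: der)
  also have "\<dots> = (\<Sum>i\<le>N. - (\<Sum>m\<le>N. 2 * Q i m * a i m)
     - kron i 0 * (w (U t 0) \<bullet> Dp (Ul t) (U t 0)) - kron i N * (w (U t N) \<bullet> Dm (U t N) (Ur t)))"
    by (intro sum.cong refl) (use row in \<open>auto simp: algebra_simps eq_neg_iff_add_eq_0\<close>)
  also have "\<dots> = - (p N - p 0) - w (U t 0) \<bullet> Dp (Ul t) (U t 0) - w (U t N) \<bullet> Dm (U t N) (Ur t)"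
    using sum_kron_l[of 0 N "\<lambda>_. w (U t 0) \<bullet> Dp (Ul t) (U t 0)"]
      sum_kron_l[of N N "\<lambda>_. w (U t N) \<bullet> Dm (U t N) (Ur t)"]
    by (simp add: sum_subtractf sum_negf vol)
  also have "\<dots> = num_entropy_flux q w Dm (Ul t) (U t 0) - num_entropy_flux q w Dm (U t N) (Ur t)"
    using F2 Ul_in U_in[of 0] by (simp add: num_entropy_flux_def p_def)
  finally show ?thesis using F2 F3 by blast
qed

end
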